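(* Let $k\ge 2$ and $\pi=\pi_1\cdots\pi_n\in S_n(123,\,k(k-1)\cdots 21(k+1))$ with $n\ge 1$. Then the entry $n$ occupies one of the positions $1,2,\dots,k$. Moreover, let $\alpha_\pi$ be the smallest index $j\in\{2,\dots,n\}$ with $\pi_{j-1}<\pi_j$, and $\alpha_\pi=n+1$ if no such index exists. Then the active sites of $\pi$ (with respect to the class $S(123,\,k(k-1)\cdots 21(k+1))$) are exactly the first $\min(\alpha_\pi,k)$ sites of $\pi$. *)

theory Defs
  imports Main
begin

text \<open>Permutations of [n] in one-line notation, as lists (0-indexed lists,
  entry pi_i is the list element at index i-1).\<close>
definition is_perm :: "nat \<Rightarrow> nat list \<Rightarrow> bool" where
  "is_perm n p \<longleftrightarrow> length p = n \<and> set p = {1..n}"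

definition contains :: "nat list \<Rightarrow> nat list \<Rightarrow> bool" where
  "contains p s \<longleftrightarrow> (\<exists>f :: nat \<Rightarrow> nat.
      (\<forall>a b. a < b \<and> b < length s \<longrightarrow> f a < f b) \<and>
      (\<forall>a < length s. f a < length p) \<and>
      (\<forall>a < length s. \<forall>b < length s. (s ! a < s ! b \<longleftrightarrow> p ! (f a) < p ! (f b))))"

definition avoids :: "nat list \<Rightarrow> nat list \<Rightarrow> bool" where
  "avoids p s \<longleftrightarrow> \<not> contains p s"

definition dec_pat :: "nat \<Rightarrow> nat list" where
  "dec_pat k = rev [1..<k+1] @ [k+1]"

definition in_class :: "nat \<Rightarrow> nat \<Rightarrow> nat list \<Rightarrow> bool" where
  "in_class k n p \<longleftrightarrow> is_perm n p \<and> avoids p [1,2,3] \<and> avoids p (dec_pat k)"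

text \<open>Inserting the new maximum n+1 into site i (1 \<le> i \<le> n+1): site i is
  immediately before pi_i (site n+1 is at the end).\<close>
definition insert_site :: "nat list \<Rightarrow> nat \<Rightarrow> nat list" where
  "insert_site p i = take (i - 1) p @ [length p + 1] @ drop (i - 1) p"

definition active_sites :: "nat \<Rightarrow> nat list \<Rightarrow> nat set" where
  "active_sites k p = {i. 1 \<le> i \<and> i \<le> length p + 1 \<and>
      in_class k (length p + 1) (insert_site p i)}"

definition alpha :: "nat list \<Rightarrow> nat" where
  "alpha p = (if \<exists>j\<in>{2..length p}. p ! (j - 2) < p ! (j - 1)
              then (LEAST j. j \<in> {2..length p} \<and> p ! (j - 2) < p ! (j - 1))
              else length p + 1)"

end

theory Submission imports Defs begin

lemma dec_pat_len: "length (dec_pat k) = k + 1"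
  by (simp add: dec_pat_def)

lemma dec_pat_nth: "a < k \<Longrightarrow> dec_pat k ! a = k - a" "dec_pat k ! k = k + 1"
  by (auto simp: dec_pat_def nth_append rev_nth simp del: upt_Suc)

lemma contains123I:
  assumes "x < y" "y < z" "z < length p" "p!x < p!y" "p!y < p!z"
  shows "contains p [1,2,3]"
  unfolding contains_def
proof (intro exI[of _ "\<lambda>a. if a = 0 then x else if a = 1 then y else z"] conjI allI impI)
  fix a b :: nat assume "a < b \<and> b < length [1::nat,2,3]"
  then show "(if a = 0 then x else if a = 1 then y else z) < (if b = 0 then x else if b = 1 then y else z)"
    using assms by (auto simp: less_Suc_eq numeral_3_eq_3)
next
  fix a :: nat assume "a < length [1::nat,2,3]"
  then show "(if a = 0 then x else if a = 1 then y else z) < length p"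
    using assms by (auto simp: less_Suc_eq numeral_3_eq_3)
next
  fix a b :: nat assume "a < length [1::nat,2,3]" "b < length [1::nat,2,3]"
  then show "([1::nat,2,3] ! a < [1::nat,2,3] ! b) = (p ! (if a = 0 then x else if a = 1 then y else z) < p ! (if b = 0 then x else if b = 1 then y else z))"
    using assms by (auto simp: less_Suc_eq numeral_3_eq_3)
qed

lemma containsdecI:
  assumes mono: "\<And>a b. a < b \<Longrightarrow> b \<le> k \<Longrightarrow> g a < g b"
    and len: "g k < length p"
    and dec: "\<And>a b. a < b \<Longrightarrow> b < k \<Longrightarrow> p!(g b) < p!(g a)"
    and top: "\<And>a. a < k \<Longrightarrow> p!(g a) < p!(g k)"
  shows "contains p (dec_pat k)"
  unfolding contains_def dec_pat_len
proof (intro exI[of _ g] conjI allI impI)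
  fix a b assume "a < b \<and> b < k + 1" then show "g a < g b" using mono by auto
next
  fix a assume "a < k + 1" then show "g a < length p"
    using mono[of a k] len by (cases "a = k") auto
next
  fix a b assume ab: "a < k + 1" "b < k + 1"
  show "(dec_pat k ! a < dec_pat k ! b) = (p ! g a < p ! g b)"
  proof (cases "a = k")
    case True
    then show ?thesis using ab top[of b] dec_pat_nth(1)[of b k] dec_pat_nth(2)[of k]
      by (cases "b = k") auto
  next
    case False
    then have a: "a < k" using ab by auto
    show ?thesis
    proof (cases "b = k")
      case True then show ?thesis using a top[of a] dec_pat_nth(1)[of a k] dec_pat_nth(2)[of k] by auto
    next
      case False
      then have b: "b < k" using ab by auto
      have "a < b \<or> a = b \<or> b < a" by auto
      then show ?thesis using a b dec[of a b] dec[of b a] dec_pat_nth(1)[OF a] dec_pat_nth(1)[OF b]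
        by auto
    qed
  qed
qed

lemma chain_dec:
  assumes "\<And>c. c + 1 < m \<Longrightarrow> p!(c+1) < (p!c :: nat)"
  shows "a < b \<Longrightarrow> b < m \<Longrightarrow> p!b < p!a"
proof (induction b)
  case 0 then show ?case by simp
next
  case (Suc b)
  have s: "p!(Suc b) < p!b" using assms[of b] Suc by simp
  show ?case
  proof (cases "a = b")
    case True then show ?thesis using s by simp
  next
    case False then show ?thesis using Suc s by auto
  qed
qed

lemma ins_nth:
  assumes "j \<le> length p"
  shows "idx < j \<Longrightarrow> (take j p @ x # drop j p) ! idx = p ! idx"
    and "(take j p @ x # drop j p) ! j = x"
    and "j < idx \<Longrightarrow> (take j p @ x # drop j p) ! idx = p ! (idx - 1)"
  using assms by (auto simp: nth_append min_def)

lemma ins_len: "j \<le> length p \<Longrightarrow> length (take j p @ x # drop j p) = length p + 1"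
  by simp

lemma contains_insert:
  assumes c: "contains (take j p @ x # drop j p) s" and j: "j \<le> length p"
    and nc: "\<not> contains p s"
  shows "\<exists>f. (\<forall>a b. a < b \<and> b < length s \<longrightarrow> f a < f b) \<and>
      (\<forall>a < length s. f a < length p + 1) \<and>
      (\<forall>a < length s. \<forall>b < length s. (s ! a < s ! b \<longleftrightarrow> (take j p @ x # drop j p) ! (f a) < (take j p @ x # drop j p) ! (f b)))
      \<and> (\<exists>a < length s. f a = j)"
proof -
  let ?q = "take j p @ x # drop j p"
  obtain f where f1: "\<forall>a b. a < b \<and> b < length s \<longrightarrow> f a < f b"
    and f2: "\<forall>a < length s. f a < length ?q"
    and f3: "\<forall>a < length s. \<forall>b < length s. (s ! a < s ! b \<longleftrightarrow> ?q ! (f a) < ?q ! (f b))"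
    using c unfolding contains_def by blast
  show ?thesis
  proof (cases "\<exists>a < length s. f a = j")
    case True then show ?thesis using f1 f2 f3 j by auto
  next
    case False
    define g where "g a = (if f a < j then f a else f a - 1)" for a
    have qg: "?q ! (f a) = p ! (g a)" if "a < length s" for a
    proof -
      have "f a \<noteq> j" using False that by blast
      then show ?thesis
        using ins_nth(1)[OF j, of "f a" x] ins_nth(3)[OF j, of "f a" x] unfolding g_def
        by (cases "f a < j") auto
    qed
    have "contains p s" unfolding contains_def
    proof (intro exI[of _ g] conjI allI impI)
      fix a b assume "a < b \<and> b < length s"
      then have "f a < f b" "f a \<noteq> j" "f b \<noteq> j" using f1 False by auto
      then show "g a < g b" unfolding g_def by auto
    next
      fix a show "a < length s \<Longrightarrow> g a < length p"
      proof -
        assume a: "a < length s"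
        have "f a < length p + 1" "f a \<noteq> j" using a f2 False j by auto
        then show ?thesis unfolding g_def using j by auto
      qed
    next
      fix a b assume "a < length s" "b < length s"
      then show "(s ! a < s ! b) = (p ! g a < p ! g b)" using f3 qg by auto
    qed
    then show ?thesis using nc by simp
  qed
qed

lemma mono_ge:
  assumes "\<And>a b. a < b \<Longrightarrow> b < m \<Longrightarrow> f a < (f b :: nat)"
  shows "a < m \<Longrightarrow> a \<le> f a"
proof (induction a)
  case 0 then show ?case by simp
next
  case (Suc a) then show ?case using assms[of a "Suc a"] by simp
qed

theorem mainTheorem2:
  fixes k n :: nat and p :: "nat list"
  assumes "k \<ge> 2" and "n \<ge> 1" and "in_class k n p"
  shows "(\<exists>j\<in>{1..k}. j \<le> n \<and> p ! (j - 1) = n) \<and>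
         active_sites k p = {1..min (alpha p) k}"
proof -
  have len: "length p = n" and setp: "set p = {1..n}"
    and av123: "\<not> contains p [1,2,3]" and avd: "\<not> contains p (dec_pat k)"
    using assms(3) by (auto simp: in_class_def is_perm_def avoids_def)
  have dist: "distinct p" using len setp by (simp add: card_distinct)
  have inr: "1 \<le> p!t \<and> p!t \<le> n" if "t < n" for t
    using that len setp nth_mem[of t p] by auto
  have inj: "p!a = p!b \<Longrightarrow> a < n \<Longrightarrow> b < n \<Longrightarrow> a = b" for a b
    using dist len nth_eq_iff_index_eq by blast
  have part1: "\<exists>j\<in>{1..k}. j \<le> n \<and> p ! (j - 1) = n"
  proof -
    have "n \<in> set p" using setp assms(2) by auto
    then obtain t where t: "t < n" "p!t = n" using len by (auto simp: in_set_conv_nth)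
    have "t < k"
    proof (rule ccontr)
      assume "\<not> t < k"
      then have kt: "k \<le> t" by simp
      have below: "p!b < n" if "b < n" "b \<noteq> t" for b
        using inr[OF that(1)] inj[of b t] t that by force
      show False
      proof (cases "\<exists>a b. a < b \<and> b < t \<and> p!a < p!b")
        case True
        then obtain a b where ab: "a < b" "b < t" "p!a < p!b" by blast
        have "contains p [1,2,3]"
          using contains123I[OF ab(1,2), of p] ab t len below[of b] by auto
        then show False using av123 by simp
      next
        case False
        have dec: "p!b < p!a" if "a < b" "b < t" for a b
        proof -
          have "p!a \<noteq> p!b" using inj[of a b] that t by auto
          moreover have "\<not> p!a < p!b" using False that by blast
          ultimately show ?thesis by simp
        qed
        have "contains p (dec_pat k)"
        proof (rule containsdecI[where g = "\<lambda>a. if a < k then a else t"])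
          fix a b :: nat assume "a < b" "b \<le> k" then show "(if a < k then a else t) < (if b < k then b else t)"
            using kt by auto
        next
          show "(if k < k then k else t) < length p" using t len by simp
        next
          fix a b :: nat assume "a < b" "b < k" then show "p ! (if b < k then b else t) < p ! (if a < k then a else t)"
            using dec kt by auto
        next
          fix a assume "a < k" then show "p ! (if a < k then a else t) < p ! (if k < k then k else t)"
            using below[of a] t kt by auto
        qed
        then show False using avd by simp
      qed
    qed
    then show ?thesis using t by (intro bexI[of _ "t+1"]) auto
  qed
  define al where "al = alpha p"
  have AL1: "2 \<le> al \<and> al \<le> n + 1"
  proof (cases "\<exists>j\<in>{2..length p}. p ! (j - 2) < p ! (j - 1)")
    case True
    then obtain j where "j \<in> {2..length p}" "p ! (j - 2) < p ! (j - 1)" by blast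
    then have "j \<in> {2..length p} \<and> p ! (j - 2) < p ! (j - 1)" by blast
    from LeastI[of "\<lambda>j. j \<in> {2..length p} \<and> p ! (j - 2) < p ! (j - 1)", OF this]
    show ?thesis using True len unfolding al_def alpha_def by auto
  next
    case False then show ?thesis using len assms(2) unfolding al_def alpha_def by auto
  qed
  have AL2: "p!(c+1) < p!c" if "c + 1 < al - 1" for c
  proof -
    have c: "c + 1 < n" using that AL1 by auto
    have "\<not> p!c < p!(c+1)"
    proof
      assume asc: "p!c < p!(c+1)"
      have mem: "c + 2 \<in> {2..length p} \<and> p ! (c + 2 - 2) < p ! (c + 2 - 1)"
        using asc c len by auto
      then have ex: "\<exists>j\<in>{2..length p}. p ! (j - 2) < p ! (j - 1)" by blast
      have "al \<le> c + 2" unfolding al_def alpha_def using ex Least_le[of "\<lambda>j. j \<in> {2..length p} \<and> p ! (j - 2) < p ! (j - 1)" "c+2", OF mem] by simp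
      then show False using that by simp
    qed
    moreover have "p!c \<noteq> p!(c+1)" using inj[of c "c+1"] c by auto
    ultimately show ?thesis by simp
  qed
  have DEC: "p!b < p!a" if "a < b" "b < al - 1" for a b
    using chain_dec[of "al - 1" p, OF AL2] that by blast
  have AL3: "p!(al-2) < p!(al-1)" if "al \<le> n"
  proof -
    have ex: "\<exists>j\<in>{2..length p}. p ! (j - 2) < p ! (j - 1)"
    proof (rule ccontr)
      assume "\<not> ?thesis" then have "al = n + 1" unfolding al_def alpha_def using len by simp
      then show False using that by simp
    qed
    then obtain j where "j \<in> {2..length p}" "p ! (j - 2) < p ! (j - 1)" by blast
    then have "j \<in> {2..length p} \<and> p ! (j - 2) < p ! (j - 1)" by blast
    from LeastI[of "\<lambda>j. j \<in> {2..length p} \<and> p ! (j - 2) < p ! (j - 1)", OF this]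
    show ?thesis using ex unfolding al_def alpha_def by auto
  qed
  have part2: "i \<in> active_sites k p \<longleftrightarrow> i \<in> {1..min al k}" for i
  proof
    assume "i \<in> active_sites k p"
    then have i: "1 \<le> i" "i \<le> n + 1" and ic: "in_class k (n + 1) (insert_site p i)"
      unfolding active_sites_def using len by auto
    define q where "q = take (i-1) p @ (n+1) # drop (i-1) p"
    have qdef: "insert_site p i = q" unfolding q_def insert_site_def using len by simp
    have j: "i - 1 \<le> length p" using i len by simp
    have q1: "q!idx = p!idx" if "idx < i - 1" for idx
      unfolding q_def using ins_nth(1)[OF j that] .
    have q2: "q!(i-1) = n+1" unfolding q_def using ins_nth(2)[OF j] .
    have lq: "length q = n + 1" unfolding q_def using j len by simp
    have qa: "\<not> contains q [1,2,3]" "\<not> contains q (dec_pat k)"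
      using ic qdef by (auto simp: in_class_def avoids_def)
    have ia: "i \<le> al"
    proof (rule ccontr)
      assume "\<not> i \<le> al"
      then have ai: "al < i" by simp
      then have aln: "al \<le> n" using i by simp
      have "contains q [1,2,3]"
      proof (rule contains123I[of "al-2" "al-1" "i-1"])
        show "al - 2 < al - 1" "al - 1 < i - 1" using AL1 ai by auto
        show "i - 1 < length q" using lq i by simp
        show "q ! (al - 2) < q ! (al - 1)" using q1[of "al-2"] q1[of "al-1"] AL1 ai AL3[OF aln] by simp
        show "q ! (al - 1) < q ! (i - 1)" proof -
          have "al - 1 < n" using aln AL1 by simp
          moreover have "al - 1 < i - 1" using ai AL1 by arith
          ultimately show ?thesis using q1[of "al-1"] q2 inr[of "al-1"] by simp
        qed
      qed
      then show False using qa by simp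
    qed
    have ik: "i \<le> k"
    proof (rule ccontr)
      assume "\<not> i \<le> k"
      then have ki: "k < i" by simp
      have "contains q (dec_pat k)"
      proof (rule containsdecI[where g = "\<lambda>a. if a < k then a else i - 1"])
        fix a b :: nat assume "a < b" "b \<le> k" then show "(if a < k then a else i - 1) < (if b < k then b else i - 1)"
          using ki by auto
      next
        show "(if k < k then k else i - 1) < length q" using lq i by simp
      next
        fix a b :: nat assume ab: "a < b" "b < k"
        then show "q ! (if b < k then b else i - 1) < q ! (if a < k then a else i - 1)"
          using q1[of a] q1[of b] DEC[OF ab(1)] ki ia by auto
      next
        fix a assume a: "a < k"
        then show "q ! (if a < k then a else i - 1) < q ! (if k < k then k else i - 1)"
          using q1[of a] q2 inr[of a] ki i by auto
      qed
      then show False using qa by simp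
    qed
    show "i \<in> {1..min al k}" using i ia ik by simp
  next
    assume "i \<in> {1..min al k}"
    then have i1: "1 \<le> i" and ia: "i \<le> al" and ik: "i \<le> k" by auto
    have i: "i \<le> n + 1" using ia AL1 by simp
    define q where "q = take (i-1) p @ (n+1) # drop (i-1) p"
    have qdef: "insert_site p i = q" unfolding q_def insert_site_def using len by simp
    have j: "i - 1 \<le> length p" using i len by simp
    have q1: "q!idx = p!idx" if "idx < i - 1" for idx
      unfolding q_def using ins_nth(1)[OF j that] .
    have q2: "q!(i-1) = n+1" unfolding q_def using ins_nth(2)[OF j] .
    have q3: "q!idx = p!(idx-1)" if "i - 1 < idx" for idx
      unfolding q_def using ins_nth(3)[OF j that] .
    have lq: "length q = n + 1" unfolding q_def using j len by simp
    have QV: "q!idx \<le> n" if "idx < n + 1" "idx \<noteq> i - 1" for idx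
    proof (cases "idx < i - 1")
      case True then show ?thesis using q1 inr[of idx] i by auto
    next
      case False then show ?thesis using q3[of idx] inr[of "idx - 1"] that by auto
    qed
    have setq: "set q = {1..n+1}"
    proof -
      have "set q = insert (n+1) (set (take (i-1) p) \<union> set (drop (i-1) p))"
        unfolding q_def by auto
      also have "set (take (i-1) p) \<union> set (drop (i-1) p) = set p"
        by (metis append_take_drop_id set_append)
      finally show ?thesis using setp by auto
    qed
    have top: "s!b < s!a"
      if f1: "\<forall>a b. a < b \<and> b < length s \<longrightarrow> f a < f b"
      and f2: "\<forall>a < length s. f a < length p + 1"
      and f3: "\<forall>a < length s. \<forall>b < length s. (s ! a < s ! b \<longleftrightarrow> q ! (f a) < q ! (f b))"
      and fa: "a < length s" "f a = i - 1" and b: "b < length s" "b \<noteq> a"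
      for s :: "nat list" and f a b
    proof -
      have "b < a \<or> a < b" using b by auto
      then have "f b \<noteq> f a"
      proof
        assume "b < a" then have "f b < f a" using f1 fa by blast
        then show ?thesis by simp
      next
        assume "a < b" then have "f a < f b" using f1 b by blast
        then show ?thesis by simp
      qed
      then have "q!(f b) \<le> n" using QV[of "f b"] f2 b fa len by auto
      then have "q!(f b) < q!(f a)" using q2 fa by simp
      then show ?thesis using f3 fa b by blast
    qed
    have c123: "\<not> contains q [1,2,3]"
    proof
      assume "contains q [1,2,3]"
      from contains_insert[OF this[unfolded q_def] j av123]
      obtain f a where f1: "\<forall>a b. a < b \<and> b < length [1::nat,2,3] \<longrightarrow> f a < f b"
        and f2: "\<forall>a < length [1::nat,2,3]. f a < length p + 1"
        and f3: "\<forall>a < length [1::nat,2,3]. \<forall>b < length [1::nat,2,3]. ([1::nat,2,3] ! a < [1,2,3] ! b \<longleftrightarrow> q ! (f a) < q ! (f b))"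
        and fa: "a < length [1::nat,2,3]" "f a = i - 1"
        unfolding q_def[symmetric] by blast
      have a2: "a = 2"
      proof (rule ccontr)
        assume "a \<noteq> 2"
        from top[OF f1 f2 f3 fa, of 2] this fa show False by (auto simp: less_Suc_eq numeral_3_eq_3)
      qed
      have m: "f 0 < f 1" "f 1 < f 2" using f1 by auto
      have "[1::nat,2,3]!0 < [1::nat,2,3]!1 \<longleftrightarrow> q!(f 0) < q!(f 1)" using f3[rule_format, of 0 1] by simp
      then have "q!(f 0) < q!(f 1)" by simp
      moreover have "f 1 < i - 1" using m a2 fa by simp
      moreover have "f 1 < al - 1" using \<open>f 1 < i - 1\<close> ia by arith
      ultimately show False using q1[of "f 0"] q1[of "f 1"] DEC[of "f 0" "f 1"] m by auto
    qed
    have cdec: "\<not> contains q (dec_pat k)"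
    proof
      assume "contains q (dec_pat k)"
      from contains_insert[OF this[unfolded q_def] j avd]
      obtain f a where f1: "\<forall>a b. a < b \<and> b < length (dec_pat k) \<longrightarrow> f a < f b"
        and f2: "\<forall>a < length (dec_pat k). f a < length p + 1"
        and f3: "\<forall>a < length (dec_pat k). \<forall>b < length (dec_pat k). (dec_pat k ! a < dec_pat k ! b \<longleftrightarrow> q ! (f a) < q ! (f b))"
        and fa: "a < length (dec_pat k)" "f a = i - 1"
        unfolding q_def[symmetric] by blast
      have ak: "a = k"
      proof (rule ccontr)
        assume "a \<noteq> k"
        then have "a < k" using fa dec_pat_len[of k] by simp
        with top[OF f1 f2 f3 fa, of k] show False using dec_pat_len[of k] dec_pat_nth(1)[of a k] dec_pat_nth(2)[of k] by simp
      qed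
      have "k \<le> f k" using mono_ge[of "k+1" f k] f1 dec_pat_len[of k] by auto
      then show False using fa ak ik i1 by simp
    qed
    show "i \<in> active_sites k p"
      unfolding active_sites_def in_class_def is_perm_def avoids_def
      using qdef lq setq c123 cdec i1 i len by simp
  qed
  show ?thesis using part1 part2 unfolding al_def by blast
qed

end
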